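(* Let $(X,\|\cdot\|)$ be a strictly convex two-dimensional real normed space with closed unit ball $B_X$ and unit sphere $S_X$. For every $z\in\operatorname{int}(B_X)\setminus\{0\}$ there exists exactly one unordered pair $\{x,x'\}\subset S_X$ such that $z=\tfrac12(x+x')$.
   Context: A norm is strictly convex if the unit sphere contains no nondegenerate line segment. *)

theory Defs
  imports "HOL-Analysis.Analysis"
begin

definition strictly_convex_norm :: "'a::real_normed_vector itself \<Rightarrow> bool" where
  "strictly_convex_norm _ \<longleftrightarrow>
     (\<forall>x y :: 'a. x \<noteq> y \<longrightarrow> \<not> closed_segment x y \<subseteq> sphere 0 1)"

end

theory Submission
  imports Defs
begin

lemma sc_lemma:
  fixes a b :: "'a::real_normed_vector"
  assumes sc: "strictly_convex_norm TYPE('a)"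
    and na: "norm a \<le> 1" and nb: "norm b \<le> 1" and ab: "a \<noteq> b" and t0: "0 < t" and t1: "t < 1"
  shows "norm ((1-t) *\<^sub>R a + t *\<^sub>R b) < 1"
proof (rule ccontr)
  define c where "c = (1-t) *\<^sub>R a + t *\<^sub>R b"
  assume "\<not> norm ((1-t) *\<^sub>R a + t *\<^sub>R b) < 1"
  hence c1: "norm c \<ge> 1" by (simp add: c_def)
  have cle: "norm c \<le> (1-t) * norm a + t * norm b"
    unfolding c_def using t0 t1
    by (metis (no_types, lifting) abs_of_nonneg less_eq_real_def norm_scaleR norm_triangle_ineq diff_ge_0_iff_ge)
  have "norm a = 1"
  proof (rule ccontr)
    assume "norm a \<noteq> 1" hence "norm a < 1" using na by simp
    hence "(1-t) * norm a < (1-t)" using t1 by simp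
    moreover have "t * norm b \<le> t" using nb t0 by (simp add: mult_left_le)
    ultimately show False using cle c1 by linarith
  qed
  have "norm b = 1"
  proof (rule ccontr)
    assume "norm b \<noteq> 1" hence "norm b < 1" using nb by simp
    hence "t * norm b < t" using t0 by simp
    moreover have "(1-t) * norm a \<le> 1 - t" using na t1 by (simp add: mult_left_le)
    ultimately show False using cle c1 by linarith
  qed
  have "closed_segment a b \<subseteq> sphere 0 1"
  proof
    fix m assume "m \<in> closed_segment a b"
    then obtain s where s: "0 \<le> s" "s \<le> 1" "m = (1-s) *\<^sub>R a + s *\<^sub>R b"
      unfolding closed_segment_def by auto
    have mle: "norm m \<le> 1"
    proof -
      have "norm m \<le> norm ((1-s) *\<^sub>R a) + norm (s *\<^sub>R b)" using s(3) norm_triangle_ineq by blast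
      also have "\<dots> = (1-s) * norm a + s * norm b" using s by simp
      finally show ?thesis using \<open>norm a = 1\<close> \<open>norm b = 1\<close> by simp
    qed
    have "norm m \<ge> 1"
    proof (cases "s \<le> t")
      case True
      define th where "th = (1-t)/(1-s)"
      have th0: "0 < th" "th \<le> 1" using True t1 s unfolding th_def by (auto simp: field_simps)
      have e1: "th * (1-s) = 1-t" using True t1 unfolding th_def by (auto simp: field_simps)
      have e2: "th * s + (1-th) = t" using e1 unfolding right_diff_distrib by linarith
      have "th *\<^sub>R m + (1-th) *\<^sub>R b = (th * (1-s)) *\<^sub>R a + (th * s + (1-th)) *\<^sub>R b"
        unfolding s(3) by (simp add: algebra_simps)
      hence "c = th *\<^sub>R m + (1-th) *\<^sub>R b" unfolding e1 e2 c_def by simp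
      hence "norm c \<le> th * norm m + (1-th) * norm b"
        using th0 by (metis (no_types, lifting) abs_of_nonneg less_eq_real_def norm_scaleR norm_triangle_ineq diff_ge_0_iff_ge)
      hence "1 \<le> th * norm m + (1 - th)" using c1 \<open>norm b = 1\<close> by simp
      hence "th * 1 \<le> th * norm m" by simp
      thus ?thesis using th0 by simp
    next
      case False
      define th where "th = t/s"
      have th0: "0 < th" "th \<le> 1" using False t0 s unfolding th_def by (auto simp: field_simps)
      have e2: "th * s = t" using False t0 unfolding th_def by (auto simp: field_simps)
      have e1: "th * (1-s) + (1-th) = 1-t" using e2 unfolding right_diff_distrib by linarith
      have "th *\<^sub>R m + (1-th) *\<^sub>R a = (th * (1-s) + (1-th)) *\<^sub>R a + (th * s) *\<^sub>R b"
        unfolding s(3) by (simp add: algebra_simps)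
      hence "c = th *\<^sub>R m + (1-th) *\<^sub>R a" unfolding e1 e2 c_def by simp
      hence "norm c \<le> th * norm m + (1-th) * norm a"
        using th0 by (metis (no_types, lifting) abs_of_nonneg less_eq_real_def norm_scaleR norm_triangle_ineq diff_ge_0_iff_ge)
      hence "1 \<le> th * norm m + (1 - th)" using c1 \<open>norm a = 1\<close> by simp
      hence "th * 1 \<le> th * norm m" by simp
      thus ?thesis using th0 by simp
    qed
    with mle show "m \<in> sphere 0 1" by simp
  qed
  thus False using sc ab unfolding strictly_convex_norm_def by blast
qed


lemma core_lemma:
  fixes z u w :: "'a::real_normed_vector"
  assumes sc: "strictly_convex_norm TYPE('a)"
    and h1: "norm (z+u) = 1" and h2: "norm (z-u) = 1" and h3: "norm (z+w) = 1" and h4: "norm (z-w) = 1"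
    and z0: "z \<noteq> 0" and zd: "z = a *\<^sub>R u + b *\<^sub>R w" and a0: "a > 0" and ab: "\<bar>b\<bar> \<le> a"
  shows False
proof -
  define t where "t = (a+b)/(2*a)"
  have t0: "0 \<le> t" "t \<le> 1" using a0 ab unfolding t_def by (auto simp: field_simps)
  define q where "q = (1-t) *\<^sub>R (w - z) + t *\<^sub>R (-z-w)"
  have "norm q \<le> (1-t) * norm (w-z) + t * norm (-z-w)"
    unfolding q_def using t0
    by (metis (no_types, lifting) abs_of_nonneg norm_scaleR norm_triangle_ineq diff_ge_0_iff_ge)
  also have "norm (w-z) = 1" using h4 by (simp add: norm_minus_commute)
  also have "norm (-z-w) = 1" using h3 by (metis minus_diff_eq norm_minus_cancel diff_minus_eq_add add.commute)
  finally have nq: "norm q \<le> 1" by simp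
  have qe0: "q = ((1-t) - t) *\<^sub>R w - ((1-t) + t) *\<^sub>R z"
    unfolding q_def scaleR_diff_left scaleR_add_left by (simp add: algebra_simps)
  have qe: "q = ((1-t) - t) *\<^sub>R w - z" using qe0 by simp
  have te: "(1-t) - t = -(b/a)" unfolding t_def using a0 by (simp add: field_simps)
  have dbl: "\<And>x::'a. x + x = (2::real) *\<^sub>R x" "\<And>x y::'a. x + (x + y) = (2::real) *\<^sub>R x + y"
    by (simp_all add: scaleR_2)
  define l where "l = 1/(1+2*a)"
  have dpos: "1 + 2*a \<noteq> 0" "1 + a*2 \<noteq> 0" "a \<noteq> 0" using a0 by auto
  have l0: "0 < l" "l < 1" unfolding l_def using a0 by (auto simp: field_simps)
  have r1: "(1-l) *\<^sub>R q + l *\<^sub>R (z+u) = ((1-l)*(-a) + l*(a+1)) *\<^sub>R u + ((1-l)*(-(b/a) - b) + l*b) *\<^sub>R w"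
    unfolding qe te zd by (simp add: algebra_simps dbl)
  have lm: "l*(1+2*a) = 1" unfolding l_def using dpos by simp
  have ol: "1 - l = 2*a*l" using lm by (simp add: algebra_simps)
  have c1: "(1-l)*(-a) + l*(a+1) = 1-a" unfolding ol
  proof -
    have "(2*a*l)*(-a) + l*(a+1) = (l*(1+2*a))*(1-a)" by (simp add: algebra_simps)
    thus "(2*a*l)*(-a) + l*(a+1) = 1-a" using lm by simp
  qed
  have e3: "(2*a*l)*(-(b/a) - b) = -2*l*b - 2*a*l*b" using dpos by (simp add: algebra_simps)
  have c2: "(1-l)*(-(b/a) - b) + l*b = -b" unfolding ol e3
  proof -
    have "-2*l*b - 2*a*l*b + l*b = -(l*(1+2*a))*b" by (simp add: algebra_simps)
    thus "-2*l*b - 2*a*l*b + l*b = -b" using lm by simp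
  qed
  have r2: "-z+u = (1-a) *\<^sub>R u + (-b) *\<^sub>R w" unfolding zd by (simp add: algebra_simps)
  have key: "-z+u = (1-l) *\<^sub>R q + l *\<^sub>R (z+u)" using r1 r2 c1 c2 by simp
  have "q \<noteq> z+u"
  proof
    assume "q = z+u"
    hence "-z+u = z+u" using key by (simp add: algebra_simps)
    hence "z + z = 0" by (simp add: algebra_simps)
    hence "z = 0" by (metis dbl(1) scaleR_eq_0_iff zero_neq_numeral)
    thus False using z0 by simp
  qed
  hence "norm ((1-l) *\<^sub>R q + l *\<^sub>R (z+u)) < 1" using sc_lemma[OF sc nq _ _ l0] h1 by simp
  hence "norm (-z+u) < 1" using key by simp
  moreover have "norm (-z+u) = 1" using h2 by (metis minus_diff_eq norm_minus_cancel uminus_add_conv_diff)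
  ultimately show False by simp
qed


lemma comb_eq:
  fixes z u :: "'a::real_normed_vector"
  shows "(1-t) *\<^sub>R (z - u) + t *\<^sub>R (z + u) = z + (2*t-1) *\<^sub>R u"
proof -
  have "(1-t) *\<^sub>R (z - u) + t *\<^sub>R (z + u) = ((1-t)+t) *\<^sub>R z + (t - (1-t)) *\<^sub>R u"
    unfolding scaleR_diff_left scaleR_add_left by (simp add: algebra_simps)
  thus ?thesis by simp
qed

lemma collinear_lemma:
  fixes z u :: "'a::real_normed_vector"
  assumes sc: "strictly_convex_norm TYPE('a)"
    and h1: "norm (z+u) = 1" and h2: "norm (z-u) = 1"
    and h3: "norm (z + c *\<^sub>R u) = 1" and h4: "norm (z - c *\<^sub>R u) = 1"
    and u0: "u \<noteq> 0" and c1: "c \<noteq> 1" and c2: "c \<noteq> -1"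
  shows False
proof (cases "\<bar>c\<bar> < 1")
  case True
  define t where "t = (1+c)/2"
  have t0: "0 < t" "t < 1" using True unfolding t_def by auto
  have dd: "(z+u) - (z-u) = (2::real) *\<^sub>R u" by (simp add: scaleR_2 algebra_simps)
  have ne: "z - u \<noteq> z + u"
  proof
    assume eq: "z - u = z + u"
    have "(2::real) *\<^sub>R u = 0" using dd[unfolded eq] by simp
    thus False using u0 by simp
  qed
  have "norm ((1-t) *\<^sub>R (z - u) + t *\<^sub>R (z + u)) < 1"
    using sc_lemma[OF sc _ _ ne t0] h1 h2 by simp
  moreover have "2*t-1 = c" unfolding t_def by (simp add: field_simps)
  ultimately have "norm (z + c *\<^sub>R u) < 1" unfolding comb_eq by simp
  thus False using h3 by simp
next
  case False
  hence cne: "c \<noteq> 0" "\<bar>c\<bar> > 1" using c1 c2 by auto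
  define t where "t = (c+1)/(2*c)"
  have t0: "0 < t" "t < 1" using cne unfolding t_def by (auto simp: field_simps abs_if split: if_splits)
  have dd: "(z + c *\<^sub>R u) - (z - c *\<^sub>R u) = (2::real) *\<^sub>R (c *\<^sub>R u)" by (simp only: scaleR_2) (simp add: algebra_simps)
  have ne: "z - c *\<^sub>R u \<noteq> z + c *\<^sub>R u"
  proof
    assume eq: "z - c *\<^sub>R u = z + c *\<^sub>R u"
    have "(2::real) *\<^sub>R (c *\<^sub>R u) = 0" using dd[unfolded eq] by simp
    thus False using u0 cne by simp
  qed
  have "norm ((1-t) *\<^sub>R (z - c *\<^sub>R u) + t *\<^sub>R (z + c *\<^sub>R u)) < 1"
    using sc_lemma[OF sc _ _ ne t0] h3 h4 by simp
  moreover have "(2*t-1) * c = 1" unfolding t_def using cne by (simp add: field_simps)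
  ultimately have "norm (z + u) < 1" unfolding comb_eq by simp
  thus False using h1 by simp
qed


lemma uniq_lemma:
  fixes z x x' y y' :: "'a::real_normed_vector"
  assumes sc: "strictly_convex_norm TYPE('a)" and dim2: "dim (UNIV :: 'a set) = 2"
    and z0: "z \<noteq> 0" and nz: "norm z < 1"
    and nx: "norm x = 1" and nx': "norm x' = 1" and ny: "norm y = 1" and ny': "norm y' = 1"
    and hx: "z = (1/2) *\<^sub>R (x + x')" and hy: "z = (1/2) *\<^sub>R (y + y')"
  shows "{x, x'} = {y, y'}"
proof -
  define u where "u = x - z"
  define w where "w = y - z"
  have sx: "x + x' = z + z" using hx by (simp add: scaleR_2[symmetric])
  have sy: "y + y' = z + z" using hy by (simp add: scaleR_2[symmetric])
  have ex: "x = z + u" and ex': "x' = z - u" using sx unfolding u_def by (simp_all add: algebra_simps)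
  have ey: "y = z + w" and ey': "y' = z - w" using sy unfolding w_def by (simp_all add: algebra_simps)
  have h1: "norm (z+u) = 1" and h2: "norm (z-u) = 1" using nx nx' ex ex' by simp_all
  have h3: "norm (z+w) = 1" and h4: "norm (z-w) = 1" using ny ny' ey ey' by simp_all
  have u0: "u \<noteq> 0" using h1 nz by auto
  show ?thesis
  proof (cases "w = u \<or> w = -u")
    case True
    thus ?thesis using ex ex' ey ey' by auto
  next
    case False
    obtain B :: "'a set" where B: "independent B" "UNIV \<subseteq> span B" "card B = dim (UNIV :: 'a set)"
      using real_vector.basis_exists[of "UNIV :: 'a set"] by blast
    have cB: "card B = 2" using B(3) dim2 by simp
    have fB: "finite B" using cB by (metis card.infinite zero_neq_numeral)
    show ?thesis
    proof (cases "w \<in> span {u}")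
      case True
      then obtain c where wc: "w = c *\<^sub>R u" unfolding span_singleton by auto
      have "c \<noteq> 1" "c \<noteq> -1" using False wc by auto
      with collinear_lemma[OF sc h1 h2, of c] h3 h4 wc u0 show ?thesis by simp
    next
      case False
      have iu: "independent {u}" using independent_insertI[of u "{}"] u0 by (simp add: independent_empty)
      have iwu: "independent {w, u}" using independent_insertI[OF False iu] .
      have zs: "z \<in> span {w, u}"
      proof (rule ccontr)
        assume nzs: "z \<notin> span {w, u}"
        have izwu: "independent {z, w, u}" using independent_insertI[OF nzs iwu] .
        have "z \<notin> {w, u}" using nzs span_base by blast
        moreover have "w \<noteq> u" using False span_base by blast
        ultimately have "card {z, w, u} = 3" by auto
        moreover have "card {z, w, u} \<le> card B" using independent_span_bound[OF fB izwu] B(2) by blast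
        ultimately show False using cB by simp
      qed
      then obtain k where "z - k *\<^sub>R w \<in> span {u}" unfolding span_insert by auto
      then obtain j where "z - k *\<^sub>R w = j *\<^sub>R u" unfolding span_singleton by auto
      hence zd: "z = j *\<^sub>R u + k *\<^sub>R w" by (simp add: algebra_simps)
      have h2': "norm (z + -u) = 1" and h1': "norm (z - -u) = 1" using h1 h2 by simp_all
      have h4': "norm (z + -w) = 1" and h3': "norm (z - -w) = 1" using h3 h4 by simp_all
      show ?thesis
      proof (cases "\<bar>k\<bar> \<le> \<bar>j\<bar>")
        case True
        have "j \<noteq> 0" using True zd z0 by auto
        show ?thesis
        proof (cases "j > 0")
          case True
          show ?thesis using core_lemma[OF sc h1 h2 h3 h4 z0 zd True] \<open>\<bar>k\<bar> \<le> \<bar>j\<bar>\<close> True by simp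
        next
          case False
          have zd': "z = (-j) *\<^sub>R (-u) + k *\<^sub>R w" using zd by simp
          have "-j > 0" using False \<open>j \<noteq> 0\<close> by simp
          have kj: "\<bar>k\<bar> \<le> -j" using \<open>\<bar>k\<bar> \<le> \<bar>j\<bar>\<close> False by simp
          show ?thesis using core_lemma[OF sc h2' h1' h3 h4 z0 zd' \<open>-j > 0\<close>] kj by simp
        qed
      next
        case False
        have "k \<noteq> 0" using False by auto
        have zd1: "z = k *\<^sub>R w + j *\<^sub>R u" using zd by (simp add: algebra_simps)
        show ?thesis
        proof (cases "k > 0")
          case True
          show ?thesis using core_lemma[OF sc h3 h4 h1 h2 z0 zd1 True] \<open>\<not> \<bar>k\<bar> \<le> \<bar>j\<bar>\<close> True by simp
        next
          case False
          have zd': "z = (-k) *\<^sub>R (-w) + j *\<^sub>R u" using zd1 by simp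
          have "-k > 0" using False \<open>k \<noteq> 0\<close> by simp
          have kj: "\<bar>j\<bar> \<le> -k" using \<open>\<not> \<bar>k\<bar> \<le> \<bar>j\<bar>\<close> False by simp
          show ?thesis using core_lemma[OF sc h4' h3' h1 h2 z0 zd' \<open>-k > 0\<close>] kj by simp
        qed
      qed
    qed
  qed
qed


lemma exist_lemma:
  fixes z :: "'a::real_normed_vector"
  assumes dim2: "dim (UNIV :: 'a set) = 2" and z0: "z \<noteq> 0" and nz: "norm z < 1"
  shows "\<exists>x x'. norm x = 1 \<and> norm x' = 1 \<and> z = (1/2) *\<^sub>R (x + x')"
proof -
  obtain v where v: "v \<notin> span {z}"
  proof (rule ccontr)
    assume "\<not> thesis"
    with that have "UNIV \<subseteq> span {z}" by blast
    hence "dim (UNIV :: 'a set) \<le> card {z}" using dim_le_card by blast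
    thus False using dim2 by simp
  qed
  define c where "c t = cos (pi*t) *\<^sub>R z + sin (pi*t) *\<^sub>R v" for t
  have cnz: "c t \<noteq> 0" for t
  proof
    assume ct0: "c t = 0"
    show False
    proof (cases "sin (pi*t) = 0")
      case True
      hence "cos (pi*t) \<noteq> 0" using sin_cos_squared_add[of "pi*t"] by auto
      moreover have "cos (pi*t) *\<^sub>R z = 0" using ct0 True unfolding c_def by simp
      ultimately show False using z0 by simp
    next
      case False
      have "sin (pi*t) *\<^sub>R v = - (cos (pi*t) *\<^sub>R z)" using ct0 unfolding c_def
        by (metis add.commute eq_neg_iff_add_eq_0)
      hence "v = (- cos (pi*t) / sin (pi*t)) *\<^sub>R z" using False
        by (metis (no_types, lifting) divide_inverse_commute inverse_eq_divide mult.commute nonzero_mult_div_cancel_left scaleR_minus_left scaleR_scaleR scaleR_one divide_self_if)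
      hence "v \<in> span {z}" unfolding span_singleton
        using rangeI[of "\<lambda>k. k *\<^sub>R z" "- cos (pi*t) / sin (pi*t)"] by simp
      thus False using v by simp
    qed
  qed
  define g where "g t = norm (2 *\<^sub>R z - (1 / norm (c t)) *\<^sub>R c t)" for t
  have cont: "continuous_on {0..1} g"
    unfolding g_def c_def using cnz[unfolded c_def]
    by (intro continuous_intros) auto
  have nz0: "norm z > 0" using z0 by simp
  have c0: "c 0 = z" and c1: "c 1 = - z" unfolding c_def by simp_all
  have "g 0 = norm ((2 - 1 / norm z) *\<^sub>R z)" unfolding g_def c0 by (simp add: algebra_simps)
  also have "\<dots> = \<bar>2 - 1 / norm z\<bar> * norm z" by simp
  also have "\<dots> = \<bar>2 * norm z - 1\<bar>" using nz0 by (simp add: abs_mult[symmetric] algebra_simps field_simps)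
  also have "\<dots> \<le> 1" using nz nz0 by (simp add: abs_le_iff)
  finally have g0: "g 0 \<le> 1" .
  have "g 1 = norm ((2 + 1 / norm z) *\<^sub>R z)" unfolding g_def c1 by (simp add: algebra_simps)
  also have "\<dots> = (2 + 1 / norm z) * norm z" using nz0 by simp
  also have "\<dots> = 2 * norm z + 1" using nz0 by (simp add: field_simps)
  finally have g1: "1 \<le> g 1" using nz0 by simp
  obtain t where "g t = 1" using IVT'[of g 0 1 1, OF g0 g1 _ cont] by auto
  define x where "x = (1 / norm (c t)) *\<^sub>R c t"
  have nx: "norm x = 1" unfolding x_def using cnz[of t] by simp
  have nx': "norm (2 *\<^sub>R z - x) = 1" using \<open>g t = 1\<close> unfolding g_def x_def .
  have "z = (1/2) *\<^sub>R (x + (2 *\<^sub>R z - x))" by simp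
  thus ?thesis using nx nx' by blast
qed

lemma norm_lt1:
  fixes z :: "'a::real_normed_vector"
  assumes "z \<in> interior (cball 0 1)" "z \<noteq> 0"
  shows "norm z < 1"
proof -
  obtain e where e: "e > 0" "ball z e \<subseteq> cball 0 1" using assms(1) mem_interior by blast
  have nz0: "norm z > 0" using assms(2) by simp
  define p where "p = (1 + e / (2 * norm z)) *\<^sub>R z"
  have "p - z = (e / (2 * norm z)) *\<^sub>R z" unfolding p_def by (simp add: algebra_simps)
  hence "dist z p = e/2" using nz0 e(1) by (simp add: dist_norm norm_minus_commute)
  hence "p \<in> ball z e" using e by simp
  hence "norm p \<le> 1" using e by auto
  moreover have "norm p = norm z + e/2" unfolding p_def using nz0 e
    by (simp add: field_simps)
  ultimately show ?thesis using e by simp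
qed

theorem lemma2p8:
  fixes z :: "'a::real_normed_vector"
  assumes "dim (UNIV :: 'a set) = 2"
    and "strictly_convex_norm TYPE('a)"
    and "z \<in> interior (cball 0 1) - {0}"
  shows "\<exists>!P. \<exists>x x'. P = {x, x'} \<and> x \<in> sphere 0 1 \<and> x' \<in> sphere 0 1
                 \<and> z = (1/2) *\<^sub>R (x + x')"
proof (rule ex_ex1I)
  have z0: "z \<noteq> 0" using assms(3) by simp
  have nz: "norm z < 1" using assms(3) norm_lt1 by blast
  {
    obtain x x' where "norm x = 1" "norm x' = 1" "z = (1/2) *\<^sub>R (x + x')"
      using exist_lemma[OF assms(1) z0 nz] by blast
    thus "\<exists>P. \<exists>x x'. P = {x, x'} \<and> x \<in> sphere 0 1 \<and> x' \<in> sphere 0 1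
                 \<and> z = (1/2) *\<^sub>R (x + x')" by auto
  }
  fix P Q
  assume "\<exists>x x'. P = {x, x'} \<and> x \<in> sphere 0 1 \<and> x' \<in> sphere 0 1 \<and> z = (1/2) *\<^sub>R (x + x')"
    and "\<exists>x x'. Q = {x, x'} \<and> x \<in> sphere 0 1 \<and> x' \<in> sphere 0 1 \<and> z = (1/2) *\<^sub>R (x + x')"
  then obtain x x' y y' where "P = {x, x'}" "norm x = 1" "norm x' = 1" "z = (1/2) *\<^sub>R (x + x')"
    "Q = {y, y'}" "norm y = 1" "norm y' = 1" "z = (1/2) *\<^sub>R (y + y')" by auto
  thus "P = Q" using uniq_lemma[OF assms(2) assms(1) z0 nz] by metis
qed

end
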